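(* Assume the setting below with bounded measurable reward $r$, measurable transition kernel $P$, measurable policy kernel $\pi$, discount $0\le\gamma<1$ and concentration $\kappa>0$. Let $\mathcal{B}_\infty$ be the space of bounded measurable functions $Q:\mathcal{S}\times\mathbb{S}^{m-1}\to\mathbb{R}$ with the sup norm $\|Q\|_\infty=\sup_{\bm{s},\bm{c}}|Q(\bm{s},\bm{c})|$. Define the smoothed Bellman operator \[ (\mathcal{T}_\kappa^\pi Q)(\bm{s},\bm{c})=\mathbb{E}\Big[r\big(\bm{s},\bm{a}^\star(\bm{s},\tilde{\bm{c}})\big)+\gamma\,Q(\bm{s}',\tilde{\bm{c}}')\Big], \] where $\tilde{\bm{c}}\sim K_\kappa(\cdot\mid\bm{c})$, $\bm{s}'\sim P(\cdot\mid\bm{s},\bm{a}^\star(\bm{s},\tilde{\bm{c}}))$, $\bm{c}'\sim\pi(\cdot\mid\bm{s}')$, $\tilde{\bm{c}}'\sim K_\kappa(\cdot\mid\bm{c}')$. Then: (1) $\mathcal{T}_\kappa^\pi$ maps $\mathcal{B}_\infty$ into itself and is a $\gamma$-contraction on $(\mathcal{B}_\infty,\|\cdot\|_\infty)$; hence it has a unique fixed point $Q_\kappa^\pi\in\mathcal{B}_\infty$. (2) For every $Q\in\mathcal{B}_\infty$ and every $\bm{s}\in\mathcal{S}$, the map $\bm{c}\mapsto(\mathcal{T}_\kappa^\pi Q)(\bm{s},\bm{c})$ is $C^\infty$ on $\mathbb{S}^{m-1}$. (3) Consequently, for every $\bm{s}\in\mathcal{S}$, $\bm{c}\mapsto Q_\kappa^\pi(\bm{s},\bm{c})$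 is $C^\infty$ on $\mathbb{S}^{m-1}$.
   Context: Setting: a discounted MDP with measurable state space $\mathcal{S}$; for each state $\bm{s}$ a finite nonempty feasible set $\mathcal{A}(\bm{s})\subseteq\{0,1\}^m$; a solver mapping $\bm{a}^\star(\bm{s},\bm{c})\in\operatorname*{argmin}_{\bm{a}\in\mathcal{A}(\bm{s})}\bm{c}^\top\bm{a}$ (with deterministic, measurable tie-breaking); reward $r(\bm{s},\bm{a})$; transition kernel $P(\cdot\mid\bm{s},\bm{a})$; a policy $\pi(\cdot\mid\bm{s})$ which is a Markov kernel from $\mathcal{S}$ to the unit sphere $\mathbb{S}^{m-1}=\{\bm{c}\in\mathbb{R}^m:\|\bm{c}\|_2=1\}$. The von Mises–Fisher kernel with concentration $\kappa>0$ is the probability density on $\mathbb{S}^{m-1}$ (w.r.t. surface measure $\sigma$) given by $K_\kappa(\tilde{\bm{c}}\mid\bm{c})=C_m(\kappa)\exp(\kappa\,\bm{c}^\top\tilde{\bm{c}})$, with $C_m(\kappa)$ the normalizing constant. *)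

theory Defs
  imports "HOL-Analysis.Analysis" "HOL-Probability.Probability"
begin

fun iter_partial :: "'a::euclidean_space list \<Rightarrow> ('a \<Rightarrow> real) \<Rightarrow> 'a \<Rightarrow> real" where
  "iter_partial [] f = f"
| "iter_partial (v # vs) f = (\<lambda>x. deriv (\<lambda>t. iter_partial vs f (x + t *\<^sub>R v)) 0)"

definition smooth_on :: "'a::euclidean_space set \<Rightarrow> ('a \<Rightarrow> real) \<Rightarrow> bool" where
  "smooth_on U f \<longleftrightarrow> open U \<and>
     (\<forall>vs. set vs \<subseteq> Basis \<longrightarrow>
        continuous_on U (iter_partial vs f) \<and>
        (\<forall>v\<in>Basis. \<forall>x\<in>U. (\<lambda>t. iter_partial vs f (x + t *\<^sub>R v)) differentiable (at 0)))"

text \<open>C-infinity on the unit sphere (embedded submanifold): extends to a C-infinity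
  function on an open neighbourhood of the sphere.\<close>
definition smooth_on_sphere :: "('a::euclidean_space \<Rightarrow> real) \<Rightarrow> bool" where
  "smooth_on_sphere g \<longleftrightarrow>
     (\<exists>U F. open U \<and> sphere 0 1 \<subseteq> U \<and> smooth_on U F \<and> (\<forall>c\<in>sphere 0 1. F c = g c))"

definition SPH :: "('a::euclidean_space) measure" where
  "SPH = restrict_space borel (sphere 0 1)"

definition sph_proj :: "'a::euclidean_space \<Rightarrow> 'a" where
  "sph_proj x = (if x = 0 then (SOME u. norm u = (1::real)) else x /\<^sub>R norm x)"

text \<open>Surface measure: sigma(A) = m * Lebesgue measure of the cone {t x | x in A, 0 < t <= 1}.\<close>
definition surface_measure :: "('a::euclidean_space) measure" where
  "surface_measure = distr (density (restrict_space lborel (ball 0 1)) (\<lambda>_. ennreal (real DIM('a))))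
                           SPH sph_proj"

definition vmf_const :: "real \<Rightarrow> 'a::euclidean_space \<Rightarrow> real" where
  "vmf_const \<kappa> c = 1 / (\<integral>y. exp (\<kappa> * (c \<bullet> y)) \<partial>surface_measure)"

definition vmf :: "real \<Rightarrow> 'a::euclidean_space \<Rightarrow> 'a measure" where
  "vmf \<kappa> c = density surface_measure (\<lambda>x. ennreal (vmf_const \<kappa> c * exp (\<kappa> * (c \<bullet> x))))"

definition binvecs :: "(real^'m) set" where
  "binvecs = {a. \<forall>i. a $ i \<in> {0, 1}}"

definition ACT :: "(real^'m) measure" where
  "ACT = restrict_space borel binvecs"

definition Bspace :: "'s measure \<Rightarrow> ('s \<times> (real^'m) \<Rightarrow> real) set" where
  "Bspace S = {Q. Q \<in> borel_measurable (S \<Otimes>\<^sub>M SPH) \<and> bounded (Q ` (space S \<times> sphere 0 1))}"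

definition supnorm :: "'s measure \<Rightarrow> ('s \<times> (real^'m) \<Rightarrow> real) \<Rightarrow> real" where
  "supnorm S Q = Sup (insert 0 ((\<lambda>x. \<bar>Q x\<bar>) ` (space S \<times> sphere 0 1)))"

definition bellman ::
  "('s \<Rightarrow> real^'m \<Rightarrow> real) \<Rightarrow> ('s \<Rightarrow> real^'m \<Rightarrow> 's measure) \<Rightarrow> ('s \<Rightarrow> (real^'m) measure)
   \<Rightarrow> ('s \<Rightarrow> real^'m \<Rightarrow> real^'m) \<Rightarrow> real \<Rightarrow> real
   \<Rightarrow> ('s \<times> (real^'m) \<Rightarrow> real) \<Rightarrow> ('s \<times> (real^'m) \<Rightarrow> real)" where
  "bellman r P \<pi> astar \<gamma> \<kappa> Q = (\<lambda>(s, c).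
     \<integral>ct. (r s (astar s ct)
            + \<gamma> * (\<integral>s'. (\<integral>c'. (\<integral>ct'. Q (s', ct') \<partial>vmf \<kappa> c') \<partial>\<pi> s') \<partial>P s (astar s ct)))
     \<partial>vmf \<kappa> c)"

end

theory Submission
  imports Defs
begin


lemma integral_measurable_subprob_algebra2':
  fixes f :: "_ \<Rightarrow> _ \<Rightarrow> real"
  assumes f[measurable]: "(\<lambda>(x, y). f x y) \<in> borel_measurable (M \<Otimes>\<^sub>M N)"
  assumes N[measurable]: "L \<in> measurable M (subprob_algebra N)"
  shows "(\<lambda>x. integral\<^sup>L (L x) (f x)) \<in> borel_measurable M"
proof -
  note integral_measurable_subprob_algebra[measurable]
  note measurable_distr2[measurable]
  have "(\<lambda>x. integral\<^sup>L (distr (L x) (M \<Otimes>\<^sub>M N) (\<lambda>y. (x, y))) (\<lambda>(x, y). f x y)) \<in> borel_measurable M"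
    by measurable
  then show "(\<lambda>x. integral\<^sup>L (L x) (f x)) \<in> borel_measurable M"
    by (rule measurable_cong[THEN iffD1, rotated])
       (simp add: integral_distr)
qed

lemma space_SPH[simp]: "space SPH = sphere 0 1"
  by (simp add: SPH_def space_restrict_space)

lemma sets_sm[measurable_cong]: "sets surface_measure = sets SPH"
  by (simp add: surface_measure_def)

lemma space_sm[simp]: "space surface_measure = sphere 0 1"
  by (simp add: surface_measure_def)

lemma sph_proj_meas: "sph_proj \<in> measurable borel (borel :: 'a::euclidean_space measure)"
  unfolding sph_proj_def
  by measurable



lemma sph_proj_sphere: "sph_proj x \<in> sphere (0::'a::euclidean_space) 1"
proof (cases "x = 0")
  case True
  obtain b :: 'a where "b \<in> Basis" using nonempty_Basis by blast
  then have "\<exists>u::'a. norm u = 1" by (intro exI[of _ b]) simp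
  then have "norm (SOME u::'a. norm u = 1) = 1" by (rule someI_ex)
  then show ?thesis using True by (simp add: sph_proj_def)
qed (simp add: sph_proj_def)

lemma sph_proj_meas2: "sph_proj \<in> measurable (density (restrict_space lborel (ball 0 1)) (\<lambda>_. ennreal (real DIM('a)))) (SPH :: 'a::euclidean_space measure)"
  unfolding SPH_def
  apply (rule measurable_restrict_space2)
  subgoal by (rule Pi_I, rule sph_proj_sphere)
  apply (subst measurable_cong_sets[OF sets_density refl])
  apply (rule measurable_restrict_space1)
  apply (subst measurable_cong_sets[OF sets_lborel refl])
  by (rule sph_proj_meas)

lemma emeasure_sm: "emeasure (surface_measure :: 'a::euclidean_space measure) (sphere 0 1)
   = ennreal (real DIM('a) * unit_ball_vol (DIM('a)))"
proof -
  have "emeasure (surface_measure :: 'a measure) (sphere 0 1) =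
    emeasure (density (restrict_space lborel (ball 0 1)) (\<lambda>_. ennreal (real DIM('a)))) (sph_proj -` sphere 0 1 \<inter> space (density (restrict_space lborel (ball (0::'a) 1)) (\<lambda>_. ennreal (real DIM('a)))))"
    unfolding surface_measure_def
    by (rule emeasure_distr[OF sph_proj_meas2]) (simp add: SPH_def sets_restrict_space_iff)
  also have "sph_proj -` sphere 0 1 \<inter> space (density (restrict_space lborel (ball (0::'a) 1)) (\<lambda>_. ennreal (real DIM('a)))) = ball 0 1"
    using sph_proj_sphere by (auto simp: space_restrict_space)
  also have "emeasure (density (restrict_space lborel (ball 0 1)) (\<lambda>_. ennreal (real DIM('a)))) (ball (0::'a) 1)
     = (\<integral>\<^sup>+ x. ennreal (real DIM('a)) * indicator (ball 0 1) x \<partial>restrict_space lborel (ball (0::'a) 1))"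
    by (rule emeasure_density) (auto simp: sets_restrict_space_iff)
  also have "\<dots> = ennreal (real DIM('a)) * emeasure (restrict_space lborel (ball (0::'a) 1)) (ball 0 1)"
    by (subst nn_integral_cmult_indicator) (auto simp: sets_restrict_space_iff)
  also have "\<dots> = ennreal (real DIM('a)) * emeasure lborel (ball (0::'a) 1)"
    by (subst emeasure_restrict_space) auto
  also have "\<dots> = ennreal (real DIM('a) * unit_ball_vol (DIM('a)))"
    by (simp add: emeasure_ball ennreal_mult)
  finally show ?thesis .
qed

lemma fin_sm: "finite_measure (surface_measure :: 'a::euclidean_space measure)"
  by (rule finite_measureI) (simp add: emeasure_sm)

lemma measure_sm_pos: "0 < measure (surface_measure :: 'a::euclidean_space measure) (sphere 0 1)"
  by (simp add: measure_def emeasure_sm)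



lemma meas_sm: "g \<in> borel_measurable borel \<Longrightarrow> g \<in> borel_measurable (surface_measure :: 'a::euclidean_space measure)"
  by (subst measurable_cong_sets[OF sets_sm refl], unfold SPH_def, rule measurable_restrict_space1)

lemma abs_int_le:
  fixes g :: "'a \<Rightarrow> real"
  assumes "finite_measure M" "\<And>x. x \<in> space M \<Longrightarrow> \<bar>g x\<bar> \<le> K"
  shows "\<bar>\<integral>x. g x \<partial>M\<bar> \<le> K * measure M (space M)"
proof (cases "integrable M g")
  case True
  interpret finite_measure M by fact
  have "\<bar>\<integral>x. g x \<partial>M\<bar> \<le> (\<integral>x. \<bar>g x\<bar> \<partial>M)" by (rule integral_abs_bound)
  also have "\<dots> \<le> (\<integral>x. K \<partial>M)"
    using True assms(2) by (intro integral_mono) auto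
  finally show ?thesis by (simp add: mult.commute)
next
  case False
  show ?thesis
  proof (cases "space M = {}")
    case True then show ?thesis using False by (simp add: not_integrable_integral_eq)
  next
    case F2: False
    then obtain x where "x \<in> space M" by auto
    with assms(2) have "0 \<le> K" by force
    then show ?thesis using False by (simp add: not_integrable_integral_eq)
  qed
qed

lemma exp_lin: "\<bar>exp y - 1\<bar> \<le> \<bar>y\<bar> * exp \<bar>y\<bar>" for y :: real
proof -
  obtain t where t: "\<bar>t\<bar> \<le> \<bar>y\<bar>" "exp y = (\<Sum>m<1. (y ^ m) / fact m) + (exp t / fact 1) * y ^ 1"
    using Maclaurin_exp_le[of y 1] by blast
  then have "exp y - 1 = exp t * y" by simp
  moreover have "exp t \<le> exp \<bar>y\<bar>" using t(1) by simp
  ultimately show ?thesis by (simp add: abs_mult mult.commute mult_left_mono)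
qed

lemma exp_quad: "\<bar>exp y - 1 - y\<bar> \<le> y\<^sup>2 * exp \<bar>y\<bar>" for y :: real
proof -
  obtain t where t: "\<bar>t\<bar> \<le> \<bar>y\<bar>" "exp y = (\<Sum>m<2. (y ^ m) / fact m) + (exp t / fact 2) * y ^ 2"
    using Maclaurin_exp_le[of y 2] by blast
  have e: "exp y - 1 - y = exp t / 2 * y\<^sup>2" using t(2) by (simp add: numeral_2_eq_2)
  have "exp t \<le> exp \<bar>y\<bar>" using t(1) by simp
  have a: "\<bar>exp y - 1 - y\<bar> = exp t / 2 * y\<^sup>2" unfolding e by simp
  have b: "exp t / 2 * y\<^sup>2 \<le> exp t * y\<^sup>2" by simp
  have c: "exp t * y\<^sup>2 \<le> exp \<bar>y\<bar> * y\<^sup>2" using \<open>exp t \<le> exp \<bar>y\<bar>\<close> by (simp add: mult_right_mono)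
  show ?thesis unfolding a using b c by (simp only: mult.commute[of "y\<^sup>2"])
qed



definition Ep :: "real \<Rightarrow> ('a::euclidean_space \<Rightarrow> real) \<Rightarrow> 'a \<Rightarrow> real" where
  "Ep \<kappa> p c = (\<integral>x. p x * exp (\<kappa> * (c \<bullet> x)) \<partial>surface_measure)"

lemma exp_meas: "(\<lambda>x. exp (\<kappa> * (c \<bullet> x))) \<in> borel_measurable (surface_measure :: 'a::euclidean_space measure)"
  by (rule meas_sm) measurable

lemma int_sm: "(g :: 'a \<Rightarrow> real) \<in> borel_measurable (surface_measure :: 'a::euclidean_space measure) \<Longrightarrow>
   (\<And>x. x \<in> sphere 0 1 \<Longrightarrow> \<bar>g x\<bar> \<le> K) \<Longrightarrow> integrable surface_measure g"
  by (rule finite_measure.integrable_const_bound[OF fin_sm, of g K]) (auto intro!: AE_I2)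

lemma inner_bd: "x \<in> sphere 0 1 \<Longrightarrow> \<bar>\<kappa> * (c \<bullet> x)\<bar> \<le> \<bar>\<kappa>\<bar> * norm c"
  using Cauchy_Schwarz_ineq2[of c x] by (simp add: abs_mult mult_left_mono)

lemma exp_inner_bd: "x \<in> sphere 0 1 \<Longrightarrow> exp (\<kappa> * (c \<bullet> x)) \<le> exp (\<bar>\<kappa>\<bar> * norm c)"
  using inner_bd[of x \<kappa> c] by simp

lemma int_E:
  assumes "p \<in> borel_measurable surface_measure" "\<And>x. x \<in> sphere 0 1 \<Longrightarrow> \<bar>p x\<bar> \<le> B"
  shows "integrable (surface_measure :: 'a::euclidean_space measure) (\<lambda>x. p x * exp (\<kappa> * (c \<bullet> x)))"
proof (rule int_sm[where K = "B * exp (\<bar>\<kappa>\<bar> * norm c)"])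
  show "(\<lambda>x. p x * exp (\<kappa> * (c \<bullet> x))) \<in> borel_measurable surface_measure"
    by (rule borel_measurable_times, rule assms(1), rule exp_meas)
  fix x :: 'a assume x: "x \<in> sphere 0 1"
  have "0 \<le> B" using assms(2)[OF x] by linarith
  have "\<bar>p x * exp (\<kappa> * (c \<bullet> x))\<bar> = \<bar>p x\<bar> * exp (\<kappa> * (c \<bullet> x))" by (simp add: abs_mult)
  also have "\<dots> \<le> B * exp (\<bar>\<kappa>\<bar> * norm c)"
    using assms(2)[OF x] exp_inner_bd[OF x] \<open>0 \<le> B\<close> by (intro mult_mono) auto
  finally show "\<bar>p x * exp (\<kappa> * (c \<bullet> x))\<bar> \<le> B * exp (\<bar>\<kappa>\<bar> * norm c)" .
qed

lemma pt_bound: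
  fixes a b h :: real
  assumes "\<bar>a\<bar> \<le> al" "\<bar>b\<bar> \<le> be" "h \<noteq> 0" "\<bar>h\<bar> \<le> 1"
  shows "\<bar>(exp (a + h * b) - exp a) / h - b * exp a\<bar> \<le> \<bar>h\<bar> * (be\<^sup>2 * exp be * exp al)"
proof -
  have e: "(exp (a + h * b) - exp a) / h - b * exp a = exp a * (exp (h * b) - 1 - h * b) / h"
    using assms(3) by (simp add: exp_add field_simps)
  have q: "\<bar>exp (h * b) - 1 - h * b\<bar> \<le> (h * b)\<^sup>2 * exp \<bar>h * b\<bar>" by (rule exp_quad)
  have hb: "\<bar>h * b\<bar> \<le> be" using assms
    by (metis abs_ge_zero abs_mult mult_le_cancel_right1 order_trans mult.commute mult_left_le)
  have "\<bar>exp a * (exp (h * b) - 1 - h * b) / h\<bar> = exp a * \<bar>exp (h * b) - 1 - h * b\<bar> / \<bar>h\<bar>"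
    by (simp add: abs_mult)
  also have "\<dots> \<le> exp a * ((h * b)\<^sup>2 * exp \<bar>h * b\<bar>) / \<bar>h\<bar>"
    using q by (intro divide_right_mono mult_left_mono) auto
  also have "\<dots> = \<bar>h\<bar> * (b\<^sup>2 * exp \<bar>h * b\<bar> * exp a)"
    using assms(3) by (simp add: power2_eq_square field_simps abs_mult_self_eq)
  also have "\<dots> \<le> \<bar>h\<bar> * (be\<^sup>2 * exp be * exp al)"
  proof (intro mult_left_mono mult_mono)
    show "b\<^sup>2 \<le> be\<^sup>2" using assms(2) by (metis abs_ge_zero abs_le_square_iff order_trans power2_abs abs_of_nonneg)
  qed (use assms hb in auto)
  finally show ?thesis using e by simp
qed

lemma Ep_deriv:
  fixes p :: "'a::euclidean_space \<Rightarrow> real"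
  assumes pm: "p \<in> borel_measurable surface_measure" and pb: "\<And>x. x \<in> sphere 0 1 \<Longrightarrow> \<bar>p x\<bar> \<le> B"
  shows "((\<lambda>t. Ep \<kappa> p (c + t *\<^sub>R v)) has_real_derivative Ep \<kappa> (\<lambda>x. p x * (\<kappa> * (v \<bullet> x))) c) (at 0)"
proof -
  define M where "M = measure (surface_measure :: 'a measure) (sphere 0 1)"
  define al where "al = \<bar>\<kappa>\<bar> * norm c"
  define be where "be = \<bar>\<kappa>\<bar> * norm v"
  define K where "K = \<bar>B\<bar> * (be\<^sup>2 * exp be * exp al) * M"
  let ?F = "\<lambda>t. Ep \<kappa> p (c + t *\<^sub>R v)"
  let ?D = "Ep \<kappa> (\<lambda>x. p x * (\<kappa> * (v \<bullet> x))) c"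
  have qm: "(\<lambda>x. p x * (\<kappa> * (v \<bullet> x))) \<in> borel_measurable surface_measure"
    by (intro borel_measurable_times pm meas_sm) measurable
  have qb: "\<bar>p x * (\<kappa> * (v \<bullet> x))\<bar> \<le> \<bar>B\<bar> * be" if x: "x \<in> sphere 0 1" for x
  proof -
    have "\<bar>p x * (\<kappa> * (v \<bullet> x))\<bar> = \<bar>p x\<bar> * \<bar>\<kappa> * (v \<bullet> x)\<bar>" by (simp add: abs_mult)
    also have "\<dots> \<le> \<bar>B\<bar> * be" unfolding be_def
      using pb[OF x] inner_bd[OF x, of \<kappa> v] by (intro mult_mono) auto
    finally show ?thesis .
  qed
  have key: "\<bar>(?F h - ?F 0) / h - ?D\<bar> \<le> K * \<bar>h\<bar>" if h: "h \<noteq> 0" "\<bar>h\<bar> \<le> 1" for h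
  proof -
    have i1: "integrable surface_measure (\<lambda>x. p x * exp (\<kappa> * ((c + h *\<^sub>R v) \<bullet> x)))"
      by (rule int_E[OF pm pb])
    have i0: "integrable surface_measure (\<lambda>x. p x * exp (\<kappa> * (c \<bullet> x)))"
      by (rule int_E[OF pm pb])
    have iq: "integrable surface_measure (\<lambda>x. p x * (\<kappa> * (v \<bullet> x)) * exp (\<kappa> * (c \<bullet> x)))"
      by (rule int_E[OF qm qb])
    have "(?F h - ?F 0) / h - ?D = (\<integral>x. (p x * exp (\<kappa> * ((c + h *\<^sub>R v) \<bullet> x)) - p x * exp (\<kappa> * (c \<bullet> x))) / h
         - p x * (\<kappa> * (v \<bullet> x)) * exp (\<kappa> * (c \<bullet> x)) \<partial>surface_measure)"
    proof -
      have a: "(\<integral>x. (p x * exp (\<kappa> * ((c + h *\<^sub>R v) \<bullet> x)) - p x * exp (\<kappa> * (c \<bullet> x))) / h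
         - p x * (\<kappa> * (v \<bullet> x)) * exp (\<kappa> * (c \<bullet> x)) \<partial>surface_measure)
        = (\<integral>x. (p x * exp (\<kappa> * ((c + h *\<^sub>R v) \<bullet> x)) - p x * exp (\<kappa> * (c \<bullet> x))) / h \<partial>surface_measure)
         - (\<integral>x. p x * (\<kappa> * (v \<bullet> x)) * exp (\<kappa> * (c \<bullet> x)) \<partial>surface_measure)"
        by (rule Bochner_Integration.integral_diff) (intro integrable_divide Bochner_Integration.integrable_diff i1 i0, rule iq)
      have b: "(\<integral>x. (p x * exp (\<kappa> * ((c + h *\<^sub>R v) \<bullet> x)) - p x * exp (\<kappa> * (c \<bullet> x))) / h \<partial>surface_measure)
         = (\<integral>x. (p x * exp (\<kappa> * ((c + h *\<^sub>R v) \<bullet> x)) - p x * exp (\<kappa> * (c \<bullet> x))) \<partial>surface_measure) / h"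
        by (rule integral_divide_zero)
      have d: "(\<integral>x. (p x * exp (\<kappa> * ((c + h *\<^sub>R v) \<bullet> x)) - p x * exp (\<kappa> * (c \<bullet> x))) \<partial>surface_measure)
         = (\<integral>x. p x * exp (\<kappa> * ((c + h *\<^sub>R v) \<bullet> x)) \<partial>surface_measure) - (\<integral>x. p x * exp (\<kappa> * (c \<bullet> x)) \<partial>surface_measure)"
        by (rule Bochner_Integration.integral_diff[OF i1 i0])
      show ?thesis unfolding a b d by (simp add: Ep_def mult.assoc)
    qed
    also have "\<bar>\<dots>\<bar> \<le> (\<bar>B\<bar> * (\<bar>h\<bar> * (be\<^sup>2 * exp be * exp al))) * measure (surface_measure :: 'a measure) (space surface_measure)"
    proof (rule abs_int_le)
      show "finite_measure (surface_measure :: 'a measure)" by (rule fin_sm)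
    next
      fix x :: 'a assume "x \<in> space surface_measure"
      then have x: "x \<in> sphere 0 1" by simp
      have eq: "(p x * exp (\<kappa> * ((c + h *\<^sub>R v) \<bullet> x)) - p x * exp (\<kappa> * (c \<bullet> x))) / h
         - p x * (\<kappa> * (v \<bullet> x)) * exp (\<kappa> * (c \<bullet> x))
         = p x * ((exp (\<kappa> * (c \<bullet> x) + h * (\<kappa> * (v \<bullet> x))) - exp (\<kappa> * (c \<bullet> x))) / h - (\<kappa> * (v \<bullet> x)) * exp (\<kappa> * (c \<bullet> x)))"
        by (simp add: inner_add_left algebra_simps diff_divide_distrib)
      have pt: "\<bar>(exp (\<kappa> * (c \<bullet> x) + h * (\<kappa> * (v \<bullet> x))) - exp (\<kappa> * (c \<bullet> x))) / h - (\<kappa> * (v \<bullet> x)) * exp (\<kappa> * (c \<bullet> x))\<bar>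
          \<le> \<bar>h\<bar> * (be\<^sup>2 * exp be * exp al)"
        unfolding al_def be_def by (rule pt_bound[OF inner_bd[OF x] inner_bd[OF x] h])
      show "\<bar>(p x * exp (\<kappa> * ((c + h *\<^sub>R v) \<bullet> x)) - p x * exp (\<kappa> * (c \<bullet> x))) / h
         - p x * (\<kappa> * (v \<bullet> x)) * exp (\<kappa> * (c \<bullet> x))\<bar> \<le> \<bar>B\<bar> * (\<bar>h\<bar> * (be\<^sup>2 * exp be * exp al))"
        unfolding eq abs_mult using pb[OF x] pt by (intro mult_mono) auto
    qed
    also have "\<dots> = K * \<bar>h\<bar>" unfolding K_def M_def by simp
    finally show ?thesis .
  qed
  have ev: "eventually (\<lambda>y. norm ((?F y - ?F 0) / (y - 0) - ?D) \<le> K * \<bar>y\<bar>) (at (0::real))"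
    unfolding eventually_at
    by (rule exI[of _ 1]) (use key in auto)
  have "((\<lambda>y::real. K * \<bar>y\<bar>) \<longlongrightarrow> K * \<bar>0\<bar>) (at 0)" by (intro tendsto_intros)
  then have lim: "((\<lambda>y::real. K * \<bar>y\<bar>) \<longlongrightarrow> 0) (at 0)" by simp
  have "((\<lambda>y. (?F y - ?F 0) / (y - 0) - ?D) \<longlongrightarrow> 0) (at 0)"
    by (rule Lim_null_comparison[OF ev lim])
  then show ?thesis
    unfolding has_field_derivative_iff by (subst (asm) LIM_zero_iff)
qed

lemma pt_bound2:
  fixes a a' :: real
  assumes "\<bar>a\<bar> \<le> al" "\<bar>a' - a\<bar> \<le> d"
  shows "\<bar>exp a' - exp a\<bar> \<le> exp al * (d * exp d)"
proof -
  have "exp a' - exp a = exp a * (exp (a' - a) - 1)" by (simp add: exp_diff field_simps)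
  then have "\<bar>exp a' - exp a\<bar> = exp a * \<bar>exp (a' - a) - 1\<bar>" by (simp add: abs_mult)
  also have "\<dots> \<le> exp a * (\<bar>a' - a\<bar> * exp \<bar>a' - a\<bar>)"
    by (intro mult_left_mono exp_lin) auto
  also have "\<dots> \<le> exp al * (d * exp d)"
    using assms by (intro mult_mono) auto
  finally show ?thesis .
qed

lemma Ep_cont:
  fixes p :: "'a::euclidean_space \<Rightarrow> real"
  assumes pm: "p \<in> borel_measurable surface_measure" and pb: "\<And>x. x \<in> sphere 0 1 \<Longrightarrow> \<bar>p x\<bar> \<le> B"
  shows "isCont (Ep \<kappa> p) c"
proof -
  define M where "M = measure (surface_measure :: 'a measure) (sphere 0 1)"
  define al where "al = \<bar>\<kappa>\<bar> * norm c"
  define L where "L = \<bar>B\<bar> * (exp al * (\<bar>\<kappa>\<bar> * exp \<bar>\<kappa>\<bar>)) * M"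
  have key: "\<bar>Ep \<kappa> p c' - Ep \<kappa> p c\<bar> \<le> L * norm (c' - c)" if d: "norm (c' - c) < 1" for c'
  proof -
    have "Ep \<kappa> p c' - Ep \<kappa> p c = (\<integral>x. p x * exp (\<kappa> * (c' \<bullet> x)) - p x * exp (\<kappa> * (c \<bullet> x)) \<partial>surface_measure)"
      unfolding Ep_def by (rule Bochner_Integration.integral_diff[symmetric, OF int_E[OF pm pb] int_E[OF pm pb]])
    also have "\<bar>\<dots>\<bar> \<le> (\<bar>B\<bar> * (exp al * ((\<bar>\<kappa>\<bar> * norm (c' - c)) * exp \<bar>\<kappa>\<bar>))) * measure (surface_measure :: 'a measure) (space surface_measure)"
    proof (rule abs_int_le)
      show "finite_measure (surface_measure :: 'a measure)" by (rule fin_sm)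
    next
      fix x :: 'a assume "x \<in> space surface_measure"
      then have x: "x \<in> sphere 0 1" by simp
      have dd: "\<bar>\<kappa> * (c' \<bullet> x) - \<kappa> * (c \<bullet> x)\<bar> \<le> \<bar>\<kappa>\<bar> * norm (c' - c)"
        using inner_bd[OF x, of \<kappa> "c' - c"] by (simp add: inner_diff_left algebra_simps)
      have "\<bar>exp (\<kappa> * (c' \<bullet> x)) - exp (\<kappa> * (c \<bullet> x))\<bar> \<le> exp al * ((\<bar>\<kappa>\<bar> * norm (c' - c)) * exp (\<bar>\<kappa>\<bar> * norm (c' - c)))"
        unfolding al_def by (rule pt_bound2[OF inner_bd[OF x] dd])
      also have "\<dots> \<le> exp al * ((\<bar>\<kappa>\<bar> * norm (c' - c)) * exp \<bar>\<kappa>\<bar>)"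
        using d by (intro mult_left_mono) (auto simp: mult_left_le)
      finally have e: "\<bar>exp (\<kappa> * (c' \<bullet> x)) - exp (\<kappa> * (c \<bullet> x))\<bar> \<le> exp al * ((\<bar>\<kappa>\<bar> * norm (c' - c)) * exp \<bar>\<kappa>\<bar>)" .
      have "p x * exp (\<kappa> * (c' \<bullet> x)) - p x * exp (\<kappa> * (c \<bullet> x)) = p x * (exp (\<kappa> * (c' \<bullet> x)) - exp (\<kappa> * (c \<bullet> x)))"
        by (simp add: algebra_simps)
      then show "\<bar>p x * exp (\<kappa> * (c' \<bullet> x)) - p x * exp (\<kappa> * (c \<bullet> x))\<bar> \<le> \<bar>B\<bar> * (exp al * ((\<bar>\<kappa>\<bar> * norm (c' - c)) * exp \<bar>\<kappa>\<bar>))"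
        using pb[OF x] e by (simp only: abs_mult) (intro mult_mono, auto)
    qed
    also have "\<dots> = L * norm (c' - c)" unfolding L_def M_def by simp
    finally show ?thesis .
  qed
  have ev: "eventually (\<lambda>c'. norm (Ep \<kappa> p c' - Ep \<kappa> p c) \<le> L * norm (c' - c)) (at c)"
    unfolding eventually_at
    by (rule exI[of _ 1]) (auto intro!: key simp: dist_norm)
  have "((\<lambda>c'. L * norm (c' - c)) \<longlongrightarrow> L * norm (c - c)) (at c)" by (intro tendsto_intros)
  then have lim: "((\<lambda>c'. L * norm (c' - c)) \<longlongrightarrow> 0) (at c)" by simp
  have "((\<lambda>c'. Ep \<kappa> p c' - Ep \<kappa> p c) \<longlongrightarrow> 0) (at c)"
    by (rule Lim_null_comparison[OF ev lim])
  then show ?thesis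
    unfolding isCont_def by (subst (asm) LIM_zero_iff)
qed



lemma Ep_one: "Ep \<kappa> (\<lambda>_. 1) c = (\<integral>x. exp (\<kappa> * (c \<bullet> x)) \<partial>surface_measure)"
  by (simp add: Ep_def)

lemma D_pos: "0 < Ep \<kappa> (\<lambda>_. 1) (c :: 'a::euclidean_space)"
proof -
  have "(\<integral>x. exp (- (\<bar>\<kappa>\<bar> * norm c)) \<partial>(surface_measure :: 'a measure)) \<le> (\<integral>x. exp (\<kappa> * (c \<bullet> x)) \<partial>surface_measure)"
  proof (rule integral_mono)
    show "integrable (surface_measure :: 'a measure) (\<lambda>x. exp (- (\<bar>\<kappa>\<bar> * norm c)))"
      using finite_measure.integrable_const[OF fin_sm] by blast
    show "integrable (surface_measure :: 'a measure) (\<lambda>x. exp (\<kappa> * (c \<bullet> x)))"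
      using int_E[of "\<lambda>_. 1" 1 \<kappa> c] by simp
    fix x :: 'a assume "x \<in> space surface_measure"
    then have "x \<in> sphere 0 1" by simp
    from inner_bd[OF this, of \<kappa> c] show "exp (- (\<bar>\<kappa>\<bar> * norm c)) \<le> exp (\<kappa> * (c \<bullet> x))" by simp
  qed
  moreover have "0 < (\<integral>x. exp (- (\<bar>\<kappa>\<bar> * norm c)) \<partial>(surface_measure :: 'a measure))"
    using measure_sm_pos[where 'a='a] by simp
  ultimately show ?thesis by (simp add: Ep_one)
qed

inductive_set Cls :: "real \<Rightarrow> ('a::euclidean_space \<Rightarrow> real) set" for \<kappa> where
  base: "p \<in> borel_measurable surface_measure \<Longrightarrow> (\<And>x. x \<in> sphere 0 1 \<Longrightarrow> \<bar>p x\<bar> \<le> B) \<Longrightarrow> Ep \<kappa> p \<in> Cls \<kappa>"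
| inv: "(\<lambda>c. 1 / Ep \<kappa> (\<lambda>_. 1) c) \<in> Cls \<kappa>"
| add: "f \<in> Cls \<kappa> \<Longrightarrow> g \<in> Cls \<kappa> \<Longrightarrow> (\<lambda>c. f c + g c) \<in> Cls \<kappa>"
| mul: "f \<in> Cls \<kappa> \<Longrightarrow> g \<in> Cls \<kappa> \<Longrightarrow> (\<lambda>c. f c * g c) \<in> Cls \<kappa>"

lemma Cls_cont: "f \<in> Cls \<kappa> \<Longrightarrow> isCont f c"
proof (induction rule: Cls.induct)
  case (base p B) then show ?case by (rule Ep_cont)
next
  case inv
  have "isCont (Ep \<kappa> (\<lambda>_. 1)) c" by (rule Ep_cont[of _ 1]) auto
  then show ?case using D_pos[of \<kappa> c] by (intro isCont_divide) auto
next
  case (add f g) then show ?case by (intro isCont_add)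
next
  case (mul f g) then show ?case by (intro isCont_mult)
qed

lemma Cls_deriv: "f \<in> Cls \<kappa> \<Longrightarrow> \<exists>g\<in>Cls \<kappa>. \<forall>c. ((\<lambda>t. f (c + t *\<^sub>R v)) has_real_derivative g c) (at 0)"
proof (induction rule: Cls.induct)
  case (base p B)
  have qm: "(\<lambda>x. p x * (\<kappa> * (v \<bullet> x))) \<in> borel_measurable surface_measure"
    by (intro borel_measurable_times base meas_sm) measurable
  have qb: "\<bar>p x * (\<kappa> * (v \<bullet> x))\<bar> \<le> \<bar>B\<bar> * (\<bar>\<kappa>\<bar> * norm v)" if x: "x \<in> sphere 0 1" for x
    unfolding abs_mult[of "p x"] using base(2)[OF x] inner_bd[OF x, of \<kappa> v] by (intro mult_mono) auto
  show ?case
    by (rule bexI[OF _ Cls.base[OF qm qb]]) (auto intro: Ep_deriv[OF base(1,2)])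
next
  case inv
  let ?D = "Ep \<kappa> (\<lambda>_. 1)"
  have qm: "(\<lambda>x. - (\<kappa> * (v \<bullet> x))) \<in> borel_measurable (surface_measure :: 'a measure)"
    by (intro meas_sm) measurable
  have qb: "\<bar>- (\<kappa> * (v \<bullet> x))\<bar> \<le> \<bar>\<kappa>\<bar> * norm v" if x: "x \<in> sphere 0 1" for x :: 'a
    using inner_bd[OF x, of \<kappa> v] by simp
  have mem: "(\<lambda>c. Ep \<kappa> (\<lambda>x. - (\<kappa> * (v \<bullet> x))) c * ((1 / ?D c) * (1 / ?D c))) \<in> Cls \<kappa>"
    by (intro Cls.mul Cls.base[OF qm qb] Cls.inv)
  have dd: "((\<lambda>t. 1 / ?D (c + t *\<^sub>R v)) has_real_derivative Ep \<kappa> (\<lambda>x. - (\<kappa> * (v \<bullet> x))) c * ((1 / ?D c) * (1 / ?D c))) (at 0)" for c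
  proof -
    have d: "((\<lambda>t. ?D (c + t *\<^sub>R v)) has_real_derivative Ep \<kappa> (\<lambda>x. 1 * (\<kappa> * (v \<bullet> x))) c) (at 0)"
      by (rule Ep_deriv[of _ 1]) auto
    have d2: "((\<lambda>t. 1 / ?D (c + t *\<^sub>R v)) has_real_derivative
       (0 * ?D (c + 0 *\<^sub>R v) - 1 * Ep \<kappa> (\<lambda>x. 1 * (\<kappa> * (v \<bullet> x))) c) / (?D (c + 0 *\<^sub>R v) * ?D (c + 0 *\<^sub>R v))) (at 0)"
      by (rule DERIV_divide[OF DERIV_const d]) (use D_pos[of \<kappa> "c + 0 *\<^sub>R v"] in simp)
    have eq: "Ep \<kappa> (\<lambda>x. - (\<kappa> * (v \<bullet> x))) c = - Ep \<kappa> (\<lambda>x. 1 * (\<kappa> * (v \<bullet> x))) c"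
      unfolding Ep_def by (subst integral_minus[symmetric]) simp
    show ?thesis
      by (rule DERIV_cong[OF d2]) (simp add: eq)
  qed
  show ?case by (rule bexI[OF _ mem]) (use dd in blast)
next
  case (add f g)
  then obtain f' g' where f': "f' \<in> Cls \<kappa>" "\<forall>c. ((\<lambda>t. f (c + t *\<^sub>R v)) has_real_derivative f' c) (at 0)"
    and g': "g' \<in> Cls \<kappa>" "\<forall>c. ((\<lambda>t. g (c + t *\<^sub>R v)) has_real_derivative g' c) (at 0)" by blast
  show ?case
    by (rule bexI[of _ "\<lambda>c. f' c + g' c"]) (use f' g' in \<open>auto intro!: DERIV_add Cls.add\<close>)
next
  case (mul f g)
  then obtain f' g' where f': "f' \<in> Cls \<kappa>" "\<forall>c. ((\<lambda>t. f (c + t *\<^sub>R v)) has_real_derivative f' c) (at 0)"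
    and g': "g' \<in> Cls \<kappa>" "\<forall>c. ((\<lambda>t. g (c + t *\<^sub>R v)) has_real_derivative g' c) (at 0)" by blast
  have dd: "((\<lambda>t. f (c + t *\<^sub>R v) * g (c + t *\<^sub>R v)) has_real_derivative f' c * g c + g' c * f c) (at 0)" for c
    using DERIV_mult[OF f'(2)[rule_format, of c] g'(2)[rule_format, of c]] by simp
  have mem: "(\<lambda>c. f' c * g c + g' c * f c) \<in> Cls \<kappa>"
    using f' g' mul by (intro Cls.add Cls.mul) auto
  show ?case by (rule bexI[OF _ mem]) (use dd in blast)
qed

lemma Cls_iter: "f \<in> Cls \<kappa> \<Longrightarrow> iter_partial vs f \<in> Cls \<kappa>"
proof (induction vs)
  case Nil then show ?case by simp
next
  case (Cons v vs)
  then have "iter_partial vs f \<in> Cls \<kappa>" by simp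
  from Cls_deriv[OF this, of v] obtain g where g: "g \<in> Cls \<kappa>"
    "\<And>c. ((\<lambda>t. iter_partial vs f (c + t *\<^sub>R v)) has_real_derivative g c) (at 0)" by blast
  have "iter_partial (v # vs) f = g"
    using DERIV_imp_deriv[OF g(2)] by (auto simp: fun_eq_iff)
  then show ?case using g(1) by simp
qed

lemma Cls_smooth: "f \<in> Cls \<kappa> \<Longrightarrow> smooth_on UNIV f"
  unfolding smooth_on_def
proof (intro conjI allI impI ballI)
  fix vs :: "'a list" and v x
  assume f: "f \<in> Cls \<kappa>"
  have h: "iter_partial vs f \<in> Cls \<kappa>" by (rule Cls_iter[OF f])
  show "continuous_on UNIV (iter_partial vs f)"
    by (intro continuous_at_imp_continuous_on ballI Cls_cont[OF h])
  from Cls_deriv[OF h, of v] obtain g where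
    "((\<lambda>t. iter_partial vs f (x + t *\<^sub>R v)) has_real_derivative g x) (at 0)" by blast
  then show "(\<lambda>t. iter_partial vs f (x + t *\<^sub>R v)) differentiable at 0"
    using has_field_derivative_imp_has_derivative unfolding differentiable_def by blast
qed simp



abbreviation DD :: "real \<Rightarrow> 'a::euclidean_space \<Rightarrow> real" where "DD \<kappa> c \<equiv> Ep \<kappa> (\<lambda>_. 1) c"

lemma sets_vmf[measurable_cong]: "sets (vmf \<kappa> c) = sets SPH"
  by (simp add: vmf_def sets_sm)

lemma space_vmf[simp]: "space (vmf \<kappa> c) = sphere 0 1"
  by (simp add: vmf_def)

lemma vmf_const_eq: "vmf_const \<kappa> c = 1 / DD \<kappa> c"
  by (simp add: vmf_const_def Ep_one)

lemma vmf_integral: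
  fixes g :: "'a::euclidean_space \<Rightarrow> real"
  assumes g: "g \<in> borel_measurable surface_measure"
  shows "(\<integral>x. g x \<partial>vmf \<kappa> c) = (1 / DD \<kappa> c) * Ep \<kappa> g c"
proof -
  have "(\<integral>x. g x \<partial>vmf \<kappa> c) = (\<integral>x. (vmf_const \<kappa> c * exp (\<kappa> * (c \<bullet> x))) *\<^sub>R g x \<partial>surface_measure)"
    unfolding vmf_def
  proof (rule integral_density[OF g])
    show "(\<lambda>x. vmf_const \<kappa> c * exp (\<kappa> * (c \<bullet> x))) \<in> borel_measurable surface_measure"
      by (intro borel_measurable_times borel_measurable_const exp_meas)
    show "AE x in surface_measure. 0 \<le> vmf_const \<kappa> c * exp (\<kappa> * (c \<bullet> x))"
      using D_pos[of \<kappa> c] by (auto simp: vmf_const_eq)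
  qed
  also have "\<dots> = (\<integral>x. vmf_const \<kappa> c * (g x * exp (\<kappa> * (c \<bullet> x))) \<partial>surface_measure)"
    by (simp add: mult_ac)
  also have "\<dots> = vmf_const \<kappa> c * Ep \<kappa> g c"
    unfolding Ep_def by (rule integral_mult_right_zero)
  finally show ?thesis by (simp add: vmf_const_eq)
qed

lemma vmf_prob: "prob_space (vmf \<kappa> (c::'a::euclidean_space))"
proof (rule prob_spaceI)
  have "emeasure (vmf \<kappa> c) (space (vmf \<kappa> c)) =
     (\<integral>\<^sup>+x. ennreal (vmf_const \<kappa> c * exp (\<kappa> * (c \<bullet> x))) * indicator (sphere 0 1) x \<partial>surface_measure)"
    unfolding vmf_def
    using sets.top[of "SPH :: 'a measure"]
    by (subst emeasure_density) (auto simp: vmf_def sets_sm intro!: exp_meas borel_measurable_times measurable_compose[OF _ measurable_ennreal])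
  also have "\<dots> = (\<integral>\<^sup>+x. ennreal (vmf_const \<kappa> c * exp (\<kappa> * (c \<bullet> x))) \<partial>surface_measure)"
    by (intro nn_integral_cong) auto
  also have "\<dots> = ennreal (\<integral>x. vmf_const \<kappa> c * exp (\<kappa> * (c \<bullet> x)) \<partial>surface_measure)"
  proof (rule nn_integral_eq_integral)
    show "integrable surface_measure (\<lambda>x. vmf_const \<kappa> c * exp (\<kappa> * (c \<bullet> x)))"
      using int_E[of "\<lambda>_. 1" 1 \<kappa> c] by (intro integrable_mult_right) simp
    show "AE x in surface_measure. 0 \<le> vmf_const \<kappa> c * exp (\<kappa> * (c \<bullet> x))"
      using D_pos[of \<kappa> c] by (auto simp: vmf_const_eq)
  qed
  also have "\<dots> = ennreal (vmf_const \<kappa> c * DD \<kappa> c)"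
    by (simp add: Ep_one)
  also have "\<dots> = 1" using D_pos[of \<kappa> c] by (simp add: vmf_const_eq)
  finally show "emeasure (vmf \<kappa> c) (space (vmf \<kappa> c)) = 1" .
qed

lemma id_SPH_meas[measurable]: "(\<lambda>x. x) \<in> measurable SPH borel"
  unfolding SPH_def by (rule measurable_restrict_space1) simp

lemma id_sm_meas[measurable]: "(\<lambda>x. x) \<in> measurable surface_measure borel"
  by (subst measurable_cong_sets[OF sets_sm refl]) (rule id_SPH_meas)

lemma DD_meas: "(\<lambda>c. 1 / DD \<kappa> c) \<in> borel_measurable (borel :: 'a::euclidean_space measure)"
proof -
  have "continuous_on UNIV (\<lambda>c::'a. 1 / DD \<kappa> c)"
    by (intro continuous_at_imp_continuous_on ballI Cls_cont[OF Cls.inv])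
  then show ?thesis by (rule borel_measurable_continuous_onI)
qed

lemma vmf_meas:
  fixes F :: "'s \<times> 'a::euclidean_space \<Rightarrow> real"
  assumes F[measurable]: "F \<in> borel_measurable (M \<Otimes>\<^sub>M SPH)"
  shows "(\<lambda>(s, c). \<integral>ct. F (s, ct) \<partial>vmf \<kappa> c) \<in> borel_measurable (M \<Otimes>\<^sub>M SPH)"
proof -
  have DDm[measurable]: "(\<lambda>c. 1 / DD \<kappa> c) \<in> borel_measurable (borel :: 'a measure)" by (rule DD_meas)
  interpret sm: finite_measure "surface_measure :: 'a measure" by (rule fin_sm)
  have "(\<lambda>(s, c). (1 / DD \<kappa> c) * (\<integral>x. F (s, x) * exp (\<kappa> * (c \<bullet> x)) \<partial>surface_measure)) \<in> borel_measurable (M \<Otimes>\<^sub>M SPH)"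
    unfolding Ep_def by measurable
  then show ?thesis
  proof (rule measurable_cong[THEN iffD1, rotated])
    fix w :: "'s \<times> 'a" assume w: "w \<in> space (M \<Otimes>\<^sub>M SPH)"
    obtain s c where sc: "w = (s, c)" by force
    with w have s: "s \<in> space M" by (simp add: space_pair_measure)
    have "(\<lambda>x. F (s, x)) \<in> borel_measurable SPH" by (rule measurable_Pair2[OF F s])
    then have "(\<lambda>x. F (s, x)) \<in> borel_measurable surface_measure"
      by (subst measurable_cong_sets[OF sets_sm refl])
    then show "(case w of (s, c) \<Rightarrow> 1 / DD \<kappa> c * (\<integral>x. F (s, x) * exp (\<kappa> * (c \<bullet> x)) \<partial>surface_measure)) =
          (case w of (s, c) \<Rightarrow> \<integral>ct. F (s, ct) \<partial>vmf \<kappa> c)"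
      unfolding sc by (simp add: vmf_integral Ep_def)
  qed
qed



lemma int_bound:
  fixes f :: "'a \<Rightarrow> real"
  assumes "prob_space M" "\<And>x. x \<in> space M \<Longrightarrow> \<bar>f x\<bar> \<le> B"
  shows "\<bar>\<integral>x. f x \<partial>M\<bar> \<le> B"
proof -
  interpret prob_space M by fact
  have "\<bar>\<integral>x. f x \<partial>M\<bar> \<le> B * measure M (space M)"
    by (rule abs_int_le) (use assms in \<open>auto simp: finite_measure_axioms\<close>)
  then show ?thesis by (simp add: prob_space)
qed

lemma int_diff_bound:
  fixes f g :: "'a \<Rightarrow> real"
  assumes "prob_space M" "f \<in> borel_measurable M" "g \<in> borel_measurable M"
    "\<And>x. x \<in> space M \<Longrightarrow> \<bar>f x\<bar> \<le> Bf" "\<And>x. x \<in> space M \<Longrightarrow> \<bar>g x\<bar> \<le> Bg"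
    "\<And>x. x \<in> space M \<Longrightarrow> \<bar>f x - g x\<bar> \<le> d"
  shows "\<bar>(\<integral>x. f x \<partial>M) - (\<integral>x. g x \<partial>M)\<bar> \<le> d"
proof -
  interpret prob_space M by fact
  have "integrable M f" by (rule integrable_const_bound[where B=Bf]) (use assms in auto)
  moreover have "integrable M g" by (rule integrable_const_bound[where B=Bg]) (use assms in auto)
  ultimately have "(\<integral>x. f x \<partial>M) - (\<integral>x. g x \<partial>M) = (\<integral>x. f x - g x \<partial>M)"
    by simp
  also have "\<bar>\<dots>\<bar> \<le> d" by (rule int_bound) (use assms in auto)
  finally show ?thesis .
qed

lemma space_ACT[simp]: "space ACT = binvecs"
  by (simp add: ACT_def space_restrict_space)

lemma Bspace_iff: "Q \<in> Bspace S \<longleftrightarrow> Q \<in> borel_measurable (S \<Otimes>\<^sub>M SPH) \<and> (\<exists>B. \<forall>x\<in>space S \<times> sphere 0 1. \<bar>Q x\<bar> \<le> B)"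
  unfolding Bspace_def bounded_iff by auto

lemma supnorm_ge:
  assumes "\<And>x. x \<in> space S \<times> sphere 0 1 \<Longrightarrow> \<bar>f x\<bar> \<le> B" "x \<in> space S \<times> sphere 0 1"
  shows "\<bar>f x\<bar> \<le> supnorm S f"
  unfolding supnorm_def
proof (rule cSup_upper)
  show "\<bar>f x\<bar> \<in> insert 0 ((\<lambda>x. \<bar>f x\<bar>) ` (space S \<times> sphere 0 1))" using assms(2) by blast
  show "bdd_above (insert 0 ((\<lambda>x. \<bar>f x\<bar>) ` (space S \<times> sphere 0 1)))"
    by (rule bdd_aboveI[of _ "max 0 B"]) (use assms(1) in force)
qed

lemma supnorm_nonneg:
  assumes "\<And>x. x \<in> space S \<times> sphere 0 1 \<Longrightarrow> \<bar>f x\<bar> \<le> B"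
  shows "0 \<le> supnorm S f"
  unfolding supnorm_def
proof (rule cSup_upper)
  show "0 \<in> insert 0 ((\<lambda>x. \<bar>f x\<bar>) ` (space S \<times> sphere 0 1))" by blast
  show "bdd_above (insert 0 ((\<lambda>x. \<bar>f x\<bar>) ` (space S \<times> sphere 0 1)))"
    by (rule bdd_aboveI[of _ "max 0 B"]) (use assms(1) in force)
qed

lemma supnorm_le:
  assumes "0 \<le> b" "\<And>x. x \<in> space S \<times> sphere 0 1 \<Longrightarrow> \<bar>f x\<bar> \<le> b"
  shows "supnorm S f \<le> b"
  unfolding supnorm_def
  by (rule cSup_least) (use assms in auto)

locale mdp =
  fixes S :: "'s measure"
    and A :: "'s \<Rightarrow> (real^'m) set"
    and astar :: "'s \<Rightarrow> real^'m \<Rightarrow> real^'m"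
    and r :: "'s \<Rightarrow> real^'m \<Rightarrow> real"
    and P :: "'s \<Rightarrow> real^'m \<Rightarrow> 's measure"
    and \<pi> :: "'s \<Rightarrow> (real^'m) measure"
    and \<gamma> \<kappa> :: real
  assumes A_fin: "\<And>s. s \<in> space S \<Longrightarrow> finite (A s) \<and> A s \<noteq> {} \<and> A s \<subseteq> binvecs"
    and astar_opt: "\<And>s c. s \<in> space S \<Longrightarrow> astar s c \<in> A s \<and> (\<forall>a\<in>A s. c \<bullet> astar s c \<le> c \<bullet> a)"
    and astar_meas: "(\<lambda>(s, c). astar s c) \<in> measurable (S \<Otimes>\<^sub>M SPH) ACT"
    and r_meas: "(\<lambda>(s, a). r s a) \<in> borel_measurable (S \<Otimes>\<^sub>M ACT)"
    and r_bdd: "\<exists>B. \<forall>s\<in>space S. \<forall>a\<in>binvecs. \<bar>r s a\<bar> \<le> B"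
    and P_meas: "(\<lambda>(s, a). P s a) \<in> measurable (S \<Otimes>\<^sub>M ACT) (prob_algebra S)"
    and \<pi>_meas: "\<pi> \<in> measurable S (prob_algebra SPH)"
    and \<gamma>: "0 \<le> \<gamma>" "\<gamma> < 1"
    and \<kappa>: "0 < \<kappa>"
begin

definition psi :: "('s \<times> (real^'m) \<Rightarrow> real) \<Rightarrow> 's \<Rightarrow> real^'m \<Rightarrow> real" where "psi Q s' c' = (\<integral>ct'. Q (s', ct') \<partial>vmf \<kappa> c')"
definition phi :: "('s \<times> (real^'m) \<Rightarrow> real) \<Rightarrow> 's \<Rightarrow> real" where "phi Q s' = (\<integral>c'. psi Q s' c' \<partial>\<pi> s')"
definition H :: "('s \<times> (real^'m) \<Rightarrow> real) \<Rightarrow> 's \<Rightarrow> real^'m \<Rightarrow> real" where "H Q s a = (\<integral>s'. phi Q s' \<partial>P s a)"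
definition G :: "('s \<times> (real^'m) \<Rightarrow> real) \<Rightarrow> 's \<Rightarrow> real^'m \<Rightarrow> real" where "G Q s ct = r s (astar s ct) + \<gamma> * H Q s (astar s ct)"

abbreviation "T \<equiv> bellman r P \<pi> astar \<gamma> \<kappa>"

lemma T_eq: "T Q (s, c) = (\<integral>ct. G Q s ct \<partial>vmf \<kappa> c)"
  by (simp add: bellman_def G_def H_def phi_def psi_def)

lemma astar_bin: "s \<in> space S \<Longrightarrow> astar s ct \<in> binvecs"
  using A_fin astar_opt by blast

lemma P_prob: assumes "s \<in> space S" "a \<in> binvecs"
  shows "prob_space (P s a)" "sets (P s a) = sets S" "space (P s a) = space S"
proof -
  have "(\<lambda>(s, a). P s a) (s, a) \<in> space (prob_algebra S)"
    by (rule measurable_space[OF P_meas]) (use assms in \<open>simp add: space_pair_measure\<close>)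
  then show "prob_space (P s a)" and ss: "sets (P s a) = sets S" by (auto simp: space_prob_algebra)
  show "space (P s a) = space S" using sets_eq_imp_space_eq[OF ss] .
qed

lemma pi_prob: assumes "s \<in> space S"
  shows "prob_space (\<pi> s)" "sets (\<pi> s) = sets SPH" "space (\<pi> s) = sphere 0 1"
proof -
  have "\<pi> s \<in> space (prob_algebra SPH)"
    by (rule measurable_space[OF \<pi>_meas]) (use assms in simp)
  then show "prob_space (\<pi> s)" and ss: "sets (\<pi> s) = sets SPH" by (auto simp: space_prob_algebra)
  show "space (\<pi> s) = sphere 0 1" using sets_eq_imp_space_eq[OF ss] by simp
qed

lemma r_bd: obtains Br where "\<And>s a. s \<in> space S \<Longrightarrow> a \<in> binvecs \<Longrightarrow> \<bar>r s a\<bar> \<le> Br"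
  using r_bdd by blast


context
  fixes Q :: "'s \<times> (real^'m) \<Rightarrow> real" assumes Qm[measurable]: "Q \<in> borel_measurable (S \<Otimes>\<^sub>M SPH)"
begin

lemma psi_meas[measurable]: "(\<lambda>(s', c'). psi Q s' c') \<in> borel_measurable (S \<Otimes>\<^sub>M SPH)"
  unfolding psi_def using vmf_meas[OF Qm, of \<kappa>] by simp

lemma phi_meas[measurable]: "phi Q \<in> borel_measurable S"
  unfolding phi_def
  by (rule integral_measurable_subprob_algebra2'[OF psi_meas measurable_prob_algebraD[OF \<pi>_meas]])

lemma H_meas[measurable]: "(\<lambda>(s, a). H Q s a) \<in> borel_measurable (S \<Otimes>\<^sub>M ACT)"
proof -
  have "(\<lambda>x. integral\<^sup>L ((\<lambda>(s, a). P s a) x) (\<lambda>s'. phi Q s')) \<in> borel_measurable (S \<Otimes>\<^sub>M ACT)"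
    by (rule integral_measurable_subprob_algebra2'[OF _ measurable_prob_algebraD[OF P_meas]]) measurable
  then show ?thesis unfolding H_def by (simp add: case_prod_beta')
qed

lemma astar_pair[measurable]: "(\<lambda>(s, ct). (s, astar s ct)) \<in> measurable (S \<Otimes>\<^sub>M SPH) (S \<Otimes>\<^sub>M ACT)"
  using astar_meas by (simp add: case_prod_beta' measurable_Pair)

lemma G_meas[measurable]: "(\<lambda>(s, ct). G Q s ct) \<in> borel_measurable (S \<Otimes>\<^sub>M SPH)"
proof -
  have 1: "(\<lambda>x. (\<lambda>(s, a). r s a) ((\<lambda>(s, ct). (s, astar s ct)) x)) \<in> borel_measurable (S \<Otimes>\<^sub>M SPH)"
    by (rule measurable_compose[OF astar_pair r_meas])
  have 2: "(\<lambda>x. (\<lambda>(s, a). H Q s a) ((\<lambda>(s, ct). (s, astar s ct)) x)) \<in> borel_measurable (S \<Otimes>\<^sub>M SPH)"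
    by (rule measurable_compose[OF astar_pair H_meas])
  have "(\<lambda>x. (\<lambda>(s, a). r s a) ((\<lambda>(s, ct). (s, astar s ct)) x) + \<gamma> * (\<lambda>(s, a). H Q s a) ((\<lambda>(s, ct). (s, astar s ct)) x)) \<in> borel_measurable (S \<Otimes>\<^sub>M SPH)"
    using 1 2 by measurable
  then show ?thesis unfolding G_def by (simp add: case_prod_beta')
qed

lemma T_meas: "T Q \<in> borel_measurable (S \<Otimes>\<^sub>M SPH)"
proof -
  have "(\<lambda>(s, c). \<integral>ct. (\<lambda>(s, ct). G Q s ct) (s, ct) \<partial>vmf \<kappa> c) \<in> borel_measurable (S \<Otimes>\<^sub>M SPH)"
    by (rule vmf_meas[OF G_meas])
  moreover have "T Q = (\<lambda>(s, c). \<integral>ct. (\<lambda>(s, ct). G Q s ct) (s, ct) \<partial>vmf \<kappa> c)"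
    by (auto simp: fun_eq_iff T_eq)
  ultimately show ?thesis by simp
qed

end

end



context mdp begin

context
  fixes Q :: "'s \<times> (real^'m) \<Rightarrow> real" and B
  assumes Qb: "\<And>x. x \<in> space S \<times> sphere 0 1 \<Longrightarrow> \<bar>Q x\<bar> \<le> B"
begin

lemma psi_bd: "s' \<in> space S \<Longrightarrow> \<bar>psi Q s' c'\<bar> \<le> B"
  unfolding psi_def by (rule int_bound[OF vmf_prob]) (auto intro!: Qb)

lemma phi_bd: "s' \<in> space S \<Longrightarrow> \<bar>phi Q s'\<bar> \<le> B"
  unfolding phi_def by (rule int_bound[OF pi_prob(1)]) (auto intro!: psi_bd)

lemma H_bd: "s \<in> space S \<Longrightarrow> a \<in> binvecs \<Longrightarrow> \<bar>H Q s a\<bar> \<le> B"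
  unfolding H_def by (rule int_bound[OF P_prob(1)]) (auto simp: P_prob(3) intro!: phi_bd)

lemma G_bd:
  assumes Br: "\<And>s a. s \<in> space S \<Longrightarrow> a \<in> binvecs \<Longrightarrow> \<bar>r s a\<bar> \<le> Br" and s: "s \<in> space S"
  shows "\<bar>G Q s ct\<bar> \<le> Br + \<gamma> * B"
proof -
  have "\<bar>G Q s ct\<bar> \<le> \<bar>r s (astar s ct)\<bar> + \<gamma> * \<bar>H Q s (astar s ct)\<bar>"
    unfolding G_def using \<gamma> by (simp add: abs_mult abs_triangle_ineq[THEN order_trans])
  also have "\<dots> \<le> Br + \<gamma> * B"
    using Br[OF s astar_bin[OF s]] H_bd[OF s astar_bin[OF s]] \<gamma> by (intro add_mono mult_left_mono) auto
  finally show ?thesis .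
qed

lemma T_bd:
  assumes Br: "\<And>s a. s \<in> space S \<Longrightarrow> a \<in> binvecs \<Longrightarrow> \<bar>r s a\<bar> \<le> Br" and s: "s \<in> space S"
  shows "\<bar>T Q (s, c)\<bar> \<le> Br + \<gamma> * B"
  unfolding T_eq by (rule int_bound[OF vmf_prob]) (rule G_bd[OF Br s])

end

context
  fixes Q1 Q2 :: "'s \<times> (real^'m) \<Rightarrow> real" and B1 B2 d
  assumes Q1m[measurable]: "Q1 \<in> borel_measurable (S \<Otimes>\<^sub>M SPH)"
    and Q2m[measurable]: "Q2 \<in> borel_measurable (S \<Otimes>\<^sub>M SPH)"
    and Q1b: "\<And>x. x \<in> space S \<times> sphere 0 1 \<Longrightarrow> \<bar>Q1 x\<bar> \<le> B1"
    and Q2b: "\<And>x. x \<in> space S \<times> sphere 0 1 \<Longrightarrow> \<bar>Q2 x\<bar> \<le> B2"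
    and Qd: "\<And>x. x \<in> space S \<times> sphere 0 1 \<Longrightarrow> \<bar>Q1 x - Q2 x\<bar> \<le> d"
begin

lemma psi_diff: assumes s: "s' \<in> space S" shows "\<bar>psi Q1 s' c' - psi Q2 s' c'\<bar> \<le> d"
  unfolding psi_def
proof (rule int_diff_bound[OF vmf_prob, where Bf=B1 and Bg=B2])
  show "(\<lambda>x. Q1 (s', x)) \<in> borel_measurable (vmf \<kappa> c')"
    using measurable_Pair2[OF Q1m s] by (subst measurable_cong_sets[OF sets_vmf refl])
  show "(\<lambda>x. Q2 (s', x)) \<in> borel_measurable (vmf \<kappa> c')"
    using measurable_Pair2[OF Q2m s] by (subst measurable_cong_sets[OF sets_vmf refl])
qed (use s Q1b Q2b Qd in auto)

lemma phi_diff: assumes s: "s' \<in> space S" shows "\<bar>phi Q1 s' - phi Q2 s'\<bar> \<le> d"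
  unfolding phi_def
proof (rule int_diff_bound[OF pi_prob(1)[OF s], where Bf=B1 and Bg=B2])
  show "psi Q1 s' \<in> borel_measurable (\<pi> s')"
  proof -
    have "(\<lambda>y. psi Q1 s' y) \<in> borel_measurable SPH"
      using measurable_Pair2[OF psi_meas[OF Q1m] s] by (simp only: case_prod_conv)
    then show ?thesis by (subst measurable_cong_sets[OF pi_prob(2)[OF s] refl])
  qed
  show "psi Q2 s' \<in> borel_measurable (\<pi> s')"
  proof -
    have "(\<lambda>y. psi Q2 s' y) \<in> borel_measurable SPH"
      using measurable_Pair2[OF psi_meas[OF Q2m] s] by (simp only: case_prod_conv)
    then show ?thesis by (subst measurable_cong_sets[OF pi_prob(2)[OF s] refl])
  qed
qed (use s psi_bd[of Q1 B1, OF Q1b] psi_bd[of Q2 B2, OF Q2b] psi_diff in auto)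

lemma H_diff: assumes s: "s \<in> space S" "a \<in> binvecs" shows "\<bar>H Q1 s a - H Q2 s a\<bar> \<le> d"
  unfolding H_def
proof (rule int_diff_bound[OF P_prob(1)[OF s], where Bf=B1 and Bg=B2])
  show "phi Q1 \<in> borel_measurable (P s a)"
    using phi_meas[OF Q1m] by (subst measurable_cong_sets[OF P_prob(2)[OF s] refl])
  show "phi Q2 \<in> borel_measurable (P s a)"
    using phi_meas[OF Q2m] by (subst measurable_cong_sets[OF P_prob(2)[OF s] refl])
qed (use s phi_bd[of Q1 B1, OF Q1b] phi_bd[of Q2 B2, OF Q2b] phi_diff in \<open>auto simp: P_prob(3)[OF s]\<close>)

lemma G_diff: assumes s: "s \<in> space S" shows "\<bar>G Q1 s ct - G Q2 s ct\<bar> \<le> \<gamma> * d"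
proof -
  have "G Q1 s ct - G Q2 s ct = \<gamma> * (H Q1 s (astar s ct) - H Q2 s (astar s ct))"
    unfolding G_def by (simp add: algebra_simps)
  then show ?thesis using H_diff[OF s astar_bin[OF s]] \<gamma>
    by (simp add: abs_mult mult_left_mono)
qed

lemma T_diff:
  assumes Br: "\<And>s a. s \<in> space S \<Longrightarrow> a \<in> binvecs \<Longrightarrow> \<bar>r s a\<bar> \<le> Br" and s: "s \<in> space S"
  shows "\<bar>T Q1 (s, c) - T Q2 (s, c)\<bar> \<le> \<gamma> * d"
  unfolding T_eq
proof (rule int_diff_bound[OF vmf_prob, where Bf="Br + \<gamma> * B1" and Bg="Br + \<gamma> * B2"])
  show "G Q1 s \<in> borel_measurable (vmf \<kappa> c)"
  proof -
    have "(\<lambda>y. G Q1 s y) \<in> borel_measurable SPH"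
      using measurable_Pair2[OF G_meas[OF Q1m] s] by (simp only: case_prod_conv)
    then show ?thesis by (subst measurable_cong_sets[OF sets_vmf refl])
  qed
  show "G Q2 s \<in> borel_measurable (vmf \<kappa> c)"
  proof -
    have "(\<lambda>y. G Q2 s y) \<in> borel_measurable SPH"
      using measurable_Pair2[OF G_meas[OF Q2m] s] by (simp only: case_prod_conv)
    then show ?thesis by (subst measurable_cong_sets[OF sets_vmf refl])
  qed
qed (use s G_bd[of Q1 B1 Br, OF Q1b Br] G_bd[of Q2 B2 Br, OF Q2b Br] G_diff in auto)

end

end



context mdp begin

lemma Bspace_E:
  assumes "Q \<in> Bspace S"
  obtains B where "Q \<in> borel_measurable (S \<Otimes>\<^sub>M SPH)" "\<And>x. x \<in> space S \<times> sphere 0 1 \<Longrightarrow> \<bar>Q x\<bar> \<le> B"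
  using assms unfolding Bspace_iff by blast

lemma T_Bspace: assumes "Q \<in> Bspace S" shows "T Q \<in> Bspace S"
proof -
  obtain B where Qm: "Q \<in> borel_measurable (S \<Otimes>\<^sub>M SPH)" and Qb: "\<And>x. x \<in> space S \<times> sphere 0 1 \<Longrightarrow> \<bar>Q x\<bar> \<le> B"
    using Bspace_E[OF assms] by blast
  obtain Br where Br: "\<And>s a. s \<in> space S \<Longrightarrow> a \<in> binvecs \<Longrightarrow> \<bar>r s a\<bar> \<le> Br" using r_bd by blast
  have "\<forall>x\<in>space S \<times> sphere 0 1. \<bar>T Q x\<bar> \<le> Br + \<gamma> * B"
    using T_bd[OF Qb Br] by auto
  then show ?thesis unfolding Bspace_iff using T_meas[OF Qm] by blast
qed

lemma diff_bd:
  assumes "\<And>x. x \<in> D \<Longrightarrow> \<bar>Q1 x\<bar> \<le> B1" "\<And>x. x \<in> D \<Longrightarrow> \<bar>(Q2 x::real)\<bar> \<le> B2"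
  shows "\<And>x. x \<in> D \<Longrightarrow> \<bar>Q1 x - Q2 x\<bar> \<le> B1 + B2"
  using assms by (smt (verit))

lemma T_contr:
  assumes "Q1 \<in> Bspace S" "Q2 \<in> Bspace S"
  shows "supnorm S (\<lambda>x. T Q1 x - T Q2 x) \<le> \<gamma> * supnorm S (\<lambda>x. Q1 x - Q2 x)"
proof -
  obtain B1 where Q1m: "Q1 \<in> borel_measurable (S \<Otimes>\<^sub>M SPH)" and Q1b: "\<And>x. x \<in> space S \<times> sphere 0 1 \<Longrightarrow> \<bar>Q1 x\<bar> \<le> B1"
    using Bspace_E[OF assms(1)] by blast
  obtain B2 where Q2m: "Q2 \<in> borel_measurable (S \<Otimes>\<^sub>M SPH)" and Q2b: "\<And>x. x \<in> space S \<times> sphere 0 1 \<Longrightarrow> \<bar>Q2 x\<bar> \<le> B2"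
    using Bspace_E[OF assms(2)] by blast
  obtain Br where Br: "\<And>s a. s \<in> space S \<Longrightarrow> a \<in> binvecs \<Longrightarrow> \<bar>r s a\<bar> \<le> Br" using r_bd by blast
  define d where "d = supnorm S (\<lambda>x. Q1 x - Q2 x)"
  have Qd: "\<bar>Q1 x - Q2 x\<bar> \<le> d" if "x \<in> space S \<times> sphere 0 1" for x
    unfolding d_def by (rule supnorm_ge[OF diff_bd[OF Q1b Q2b]]) (use that in auto)
  have "0 \<le> d" unfolding d_def by (rule supnorm_nonneg[OF diff_bd[OF Q1b Q2b]])
  show ?thesis unfolding d_def[symmetric]
  proof (rule supnorm_le)
    show "0 \<le> \<gamma> * d" using \<gamma> \<open>0 \<le> d\<close> by simp
    fix x :: "'s \<times> (real^'m)" assume "x \<in> space S \<times> sphere 0 1"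
    then obtain s c where x: "x = (s, c)" "s \<in> space S" by auto
    show "\<bar>T Q1 x - T Q2 x\<bar> \<le> \<gamma> * d"
      unfolding x(1) by (rule T_diff[OF Q1m Q2m Q1b Q2b Qd Br x(2)])
  qed
qed

lemma T_smooth:
  assumes "Q \<in> Bspace S" "s \<in> space S"
  shows "smooth_on_sphere (\<lambda>c. T Q (s, c))"
proof -
  obtain B where Qm: "Q \<in> borel_measurable (S \<Otimes>\<^sub>M SPH)" and Qb: "\<And>x. x \<in> space S \<times> sphere 0 1 \<Longrightarrow> \<bar>Q x\<bar> \<le> B"
    using Bspace_E[OF assms(1)] by blast
  obtain Br where Br: "\<And>s a. s \<in> space S \<Longrightarrow> a \<in> binvecs \<Longrightarrow> \<bar>r s a\<bar> \<le> Br" using r_bd by blast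
  have "(\<lambda>y. G Q s y) \<in> borel_measurable SPH"
    using measurable_Pair2[OF G_meas[OF Qm] assms(2)] by (simp only: case_prod_conv)
  then have Gm: "G Q s \<in> borel_measurable surface_measure"
    by (subst measurable_cong_sets[OF sets_sm refl])
  have eq: "(\<lambda>c. T Q (s, c)) = (\<lambda>c. (1 / DD \<kappa> c) * Ep \<kappa> (G Q s) c)"
    by (auto simp: fun_eq_iff T_eq vmf_integral[OF Gm])
  have "(\<lambda>c. (1 / DD \<kappa> c) * Ep \<kappa> (G Q s) c) \<in> Cls \<kappa>"
    by (intro Cls.mul Cls.inv Cls.base[OF Gm]) (rule G_bd[OF Qb Br assms(2)])
  then have "smooth_on UNIV (\<lambda>c. T Q (s, c))" unfolding eq by (rule Cls_smooth)
  then show ?thesis unfolding smooth_on_sphere_def by blast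
qed

end



context mdp begin

lemma zero_Bspace: "(\<lambda>_. 0) \<in> Bspace S"
  unfolding Bspace_iff by auto

lemma T_fix:
  "\<exists>Qs\<in>Bspace S. (\<forall>x\<in>space S \<times> sphere 0 1. T Qs x = Qs x)
          \<and> (\<forall>Q\<in>Bspace S. (\<forall>x\<in>space S \<times> sphere 0 1. T Q x = Q x)
                 \<longrightarrow> (\<forall>x\<in>space S \<times> sphere 0 1. Q x = Qs x))"
proof -
  let ?D = "space S \<times> (sphere 0 1 :: (real^'m) set)"
  obtain Br where Br: "\<And>s a. s \<in> space S \<Longrightarrow> a \<in> binvecs \<Longrightarrow> \<bar>r s a\<bar> \<le> Br" using r_bd by blast
  define Qn where "Qn n = (T ^^ n) (\<lambda>_. 0)" for n
  have QnS: "Qn (Suc n) = T (Qn n)" for n by (simp add: Qn_def)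
  have QnB: "Qn n \<in> Bspace S" for n
    by (induction n) (auto simp: Qn_def zero_Bspace intro: T_Bspace)
  have Q0: "Qn 0 = (\<lambda>_. 0)" by (simp add: Qn_def)
  have bnd: "\<exists>B. \<forall>x\<in>?D. \<bar>Qn n x - Qn m x\<bar> \<le> B" for n m
  proof -
    obtain B1 where b1: "\<And>x. x \<in> ?D \<Longrightarrow> \<bar>Qn n x\<bar> \<le> B1" using Bspace_E[OF QnB] by blast
    obtain B2 where b2: "\<And>x. x \<in> ?D \<Longrightarrow> \<bar>Qn m x\<bar> \<le> B2" using Bspace_E[OF QnB] by blast
    show ?thesis by (rule exI[of _ "B1 + B2"], rule ballI, rule diff_bd[OF b1 b2])
  qed
  define d0 where "d0 = supnorm S (\<lambda>x. Qn 1 x - Qn 0 x)"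
  have d0: "0 \<le> d0"
  proof -
    obtain B where B: "\<forall>x\<in>?D. \<bar>Qn 1 x - Qn 0 x\<bar> \<le> B" using bnd by blast
    show ?thesis unfolding d0_def by (rule supnorm_nonneg[of S _ B], rule bspec[OF B], assumption)
  qed
  have step: "supnorm S (\<lambda>x. Qn (Suc n) x - Qn n x) \<le> \<gamma> ^ n * d0" for n
  proof (induction n)
    case 0 then show ?case by (simp add: d0_def)
  next
    case (Suc n)
    have "supnorm S (\<lambda>x. Qn (Suc (Suc n)) x - Qn (Suc n) x) \<le> \<gamma> * supnorm S (\<lambda>x. Qn (Suc n) x - Qn n x)"
      unfolding QnS by (rule T_contr[OF T_Bspace[OF QnB] QnB])
    also have "\<dots> \<le> \<gamma> * (\<gamma> ^ n * d0)" using Suc \<gamma> by (intro mult_left_mono) auto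
    finally show ?case by simp
  qed
  have pstep: "\<bar>Qn (Suc n) x - Qn n x\<bar> \<le> \<gamma> ^ n * d0" if x: "x \<in> ?D" for n x
  proof -
    obtain B where B: "\<forall>x\<in>?D. \<bar>Qn (Suc n) x - Qn n x\<bar> \<le> B" using bnd by blast
    have "\<bar>Qn (Suc n) x - Qn n x\<bar> \<le> supnorm S (\<lambda>x. Qn (Suc n) x - Qn n x)"
      by (rule supnorm_ge[of S "\<lambda>x. Qn (Suc n) x - Qn n x" B x]) (rule bspec[OF B], assumption, rule x)
    then show ?thesis using step[of n] by linarith
  qed
  define e where "e n = d0 * \<gamma> ^ n / (1 - \<gamma>)" for n
  have tail: "\<bar>Qn m x - Qn n x\<bar> \<le> d0 * (\<gamma> ^ n - \<gamma> ^ m) / (1 - \<gamma>)" if x: "x \<in> ?D" and nm: "n \<le> m" for n m x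
    using nm
  proof (induction m rule: dec_induct)
    case base then show ?case by simp
  next
    case (step m)
    have "\<bar>Qn (Suc m) x - Qn n x\<bar> \<le> \<bar>Qn (Suc m) x - Qn m x\<bar> + \<bar>Qn m x - Qn n x\<bar>" by linarith
    also have "\<dots> \<le> \<gamma> ^ m * d0 + d0 * (\<gamma> ^ n - \<gamma> ^ m) / (1 - \<gamma>)"
      using pstep[OF x, of m] step.IH by linarith
    also have "\<dots> = d0 * (\<gamma> ^ n - \<gamma> ^ Suc m) / (1 - \<gamma>)"
      using \<gamma> by (simp add: field_simps)
    finally show ?case .
  qed
  have tail2: "\<bar>Qn m x - Qn n x\<bar> \<le> e n" if x: "x \<in> ?D" and nm: "n \<le> m" for n m x
  proof -
    have "d0 * (\<gamma> ^ n - \<gamma> ^ m) / (1 - \<gamma>) \<le> e n"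
      unfolding e_def using \<gamma> d0 by (intro divide_right_mono mult_left_mono) auto
    then show ?thesis using tail[OF x nm] by linarith
  qed
  define Qs where "Qs x = (\<Sum>j. Qn (Suc j) x - Qn j x)" for x
  have conv: "(\<lambda>n. Qn n x) \<longlonglongrightarrow> Qs x" if x: "x \<in> ?D" for x
  proof -
    have "summable (\<lambda>j. \<gamma> ^ j * d0)" using \<gamma> by (intro summable_mult2 summable_geometric) auto
    then have "summable (\<lambda>j. Qn (Suc j) x - Qn j x)"
      by (rule summable_comparison_test[rotated]) (use pstep[OF x] in auto)
    then have "(\<lambda>n. \<Sum>j<n. Qn (Suc j) x - Qn j x) \<longlonglongrightarrow> Qs x"
      unfolding Qs_def by (rule summable_LIMSEQ)
    then show ?thesis by (simp add: sum_lessThan_telescope[of "\<lambda>j. Qn j x"] Q0)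
  qed
  have Qs_tail: "\<bar>Qs x - Qn n x\<bar> \<le> e n" if x: "x \<in> ?D" for n x
  proof (rule LIMSEQ_le_const2)
    show "(\<lambda>m. \<bar>Qn m x - Qn n x\<bar>) \<longlonglongrightarrow> \<bar>Qs x - Qn n x\<bar>"
      by (intro tendsto_intros conv[OF x])
    show "\<exists>N. \<forall>m\<ge>N. \<bar>Qn m x - Qn n x\<bar> \<le> e n" using tail2[OF x] by blast
  qed
  have QsB: "Qs \<in> Bspace S"
    unfolding Bspace_iff
  proof
    show "Qs \<in> borel_measurable (S \<Otimes>\<^sub>M SPH)"
    proof (rule borel_measurable_LIMSEQ_metric[of Qn])
      show "Qn i \<in> borel_measurable (S \<Otimes>\<^sub>M SPH)" for i using Bspace_E[OF QnB] by blast
      show "x \<in> space (S \<Otimes>\<^sub>M SPH) \<Longrightarrow> (\<lambda>i. Qn i x) \<longlonglongrightarrow> Qs x" for x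
        by (rule conv) (simp add: space_pair_measure)
    qed
    show "\<exists>B. \<forall>x\<in>?D. \<bar>Qs x\<bar> \<le> B"
      using Qs_tail[of _ 0] by (auto simp: Q0)
  qed
  obtain Bs where Qsm: "Qs \<in> borel_measurable (S \<Otimes>\<^sub>M SPH)" and Qsb: "\<And>x. x \<in> ?D \<Longrightarrow> \<bar>Qs x\<bar> \<le> Bs"
    using Bspace_E[OF QsB] by blast
  have fixp: "T Qs x = Qs x" if x: "x \<in> ?D" for x
  proof -
    obtain s c where xs: "x = (s, c)" "s \<in> space S" using x by auto
    have bound: "\<bar>T Qs x - Qs x\<bar> \<le> 2 * d0 / (1 - \<gamma>) * \<gamma> ^ n" for n
    proof -
      obtain Bn where Qnm: "Qn n \<in> borel_measurable (S \<Otimes>\<^sub>M SPH)" and Qnb: "\<And>x. x \<in> ?D \<Longrightarrow> \<bar>Qn n x\<bar> \<le> Bn"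
        using Bspace_E[OF QnB] by blast
      have "\<bar>T Qs x - T (Qn n) x\<bar> \<le> \<gamma> * e n"
        unfolding xs(1) by (rule T_diff[OF Qsm Qnm Qsb Qnb Qs_tail Br xs(2)])
      moreover have "\<bar>Qn (Suc n) x - Qs x\<bar> \<le> e (Suc n)" using Qs_tail[OF x, of "Suc n"] by linarith
      moreover have "\<gamma> * e n \<le> e n" "e (Suc n) \<le> e n"
        unfolding e_def using \<gamma> d0 by (auto intro!: divide_right_mono mult_left_mono mult_left_le_one_le simp: mult_le_cancel_left1)
      ultimately have "\<bar>T Qs x - Qs x\<bar> \<le> 2 * e n" unfolding QnS by linarith
      then show ?thesis by (simp add: e_def field_simps)
    qed
    have "(\<lambda>n. 2 * d0 / (1 - \<gamma>) * \<gamma> ^ n) \<longlonglongrightarrow> 2 * d0 / (1 - \<gamma>) * 0"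
      using \<gamma> by (intro tendsto_intros LIMSEQ_power_zero) auto
    then have lim: "(\<lambda>n. 2 * d0 / (1 - \<gamma>) * \<gamma> ^ n) \<longlonglongrightarrow> 0" by simp
    have "\<bar>T Qs x - Qs x\<bar> \<le> 0"
      by (rule LIMSEQ_le_const[OF lim]) (use bound in blast)
    then show ?thesis by simp
  qed
  have uniq: "Q x = Qs x" if QB: "Q \<in> Bspace S" and Qf: "\<forall>x\<in>?D. T Q x = Q x" and x: "x \<in> ?D" for Q x
  proof -
    obtain B where Qm: "Q \<in> borel_measurable (S \<Otimes>\<^sub>M SPH)" and Qb: "\<And>x. x \<in> ?D \<Longrightarrow> \<bar>Q x\<bar> \<le> B"
      using Bspace_E[OF QB] by blast
    define d where "d = supnorm S (\<lambda>x. Q x - Qs x)"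
    have Qd: "\<bar>Q x - Qs x\<bar> \<le> d" if "x \<in> ?D" for x
      unfolding d_def by (rule supnorm_ge[OF diff_bd[OF Qb Qsb]]) (use that in auto)
    have "0 \<le> d" unfolding d_def by (rule supnorm_nonneg[OF diff_bd[OF Qb Qsb]])
    have TT: "\<bar>Q y - Qs y\<bar> \<le> \<gamma> * d" if y: "y \<in> ?D" for y
    proof -
      obtain s c where ys: "y = (s, c)" "s \<in> space S" using y by auto
      have "\<bar>T Q y - T Qs y\<bar> \<le> \<gamma> * d"
        unfolding ys(1) by (rule T_diff[OF Qm Qsm Qb Qsb Qd Br ys(2)])
      then show ?thesis using Qf fixp y by simp
    qed
    have "d \<le> \<gamma> * d" unfolding d_def
      by (rule supnorm_le) (use \<gamma> \<open>0 \<le> d\<close> TT in \<open>auto simp: d_def\<close>)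
    then have "d = 0" using \<gamma> \<open>0 \<le> d\<close> by (smt (verit) mult_le_cancel_right1 mult_left_le_one_le)
    then show ?thesis using TT[OF x] by simp
  qed
  show ?thesis using QsB fixp uniq by blast
qed

end



context mdp begin

lemma fix_smooth:
  assumes "Q \<in> Bspace S" "\<forall>x\<in>space S \<times> sphere 0 1. T Q x = Q x" "s \<in> space S"
  shows "smooth_on_sphere (\<lambda>c. Q (s, c))"
proof -
  obtain U F where UF: "open U" "sphere 0 1 \<subseteq> U" "smooth_on U F" "\<forall>c\<in>sphere 0 1. F c = T Q (s, c)"
    using T_smooth[OF assms(1,3)] unfolding smooth_on_sphere_def by blast
  have "\<forall>c\<in>sphere 0 1. F c = Q (s, c)" using UF(4) assms(2,3) by auto
  then show ?thesis unfolding smooth_on_sphere_def using UF(1-3) by blast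
qed

end

theorem theorem1:
  fixes S :: "'s measure"
    and A :: "'s \<Rightarrow> (real^'m) set"
    and astar :: "'s \<Rightarrow> real^'m \<Rightarrow> real^'m"
    and r :: "'s \<Rightarrow> real^'m \<Rightarrow> real"
    and P :: "'s \<Rightarrow> real^'m \<Rightarrow> 's measure"
    and \<pi> :: "'s \<Rightarrow> (real^'m) measure"
    and \<gamma> \<kappa> :: real
  assumes A_fin: "\<And>s. s \<in> space S \<Longrightarrow> finite (A s) \<and> A s \<noteq> {} \<and> A s \<subseteq> binvecs"
    and astar_opt: "\<And>s c. s \<in> space S \<Longrightarrow> astar s c \<in> A s \<and> (\<forall>a\<in>A s. c \<bullet> astar s c \<le> c \<bullet> a)"
    and astar_meas: "(\<lambda>(s, c). astar s c) \<in> measurable (S \<Otimes>\<^sub>M SPH) ACT"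
    and r_meas: "(\<lambda>(s, a). r s a) \<in> borel_measurable (S \<Otimes>\<^sub>M ACT)"
    and r_bdd: "\<exists>B. \<forall>s\<in>space S. \<forall>a\<in>binvecs. \<bar>r s a\<bar> \<le> B"
    and P_meas: "(\<lambda>(s, a). P s a) \<in> measurable (S \<Otimes>\<^sub>M ACT) (prob_algebra S)"
    and \<pi>_meas: "\<pi> \<in> measurable S (prob_algebra SPH)"
    and \<gamma>: "0 \<le> \<gamma>" "\<gamma> < 1"
    and \<kappa>: "0 < \<kappa>"
  defines "T \<equiv> bellman r P \<pi> astar \<gamma> \<kappa>"
  shows
    "(\<forall>Q\<in>Bspace S. T Q \<in> Bspace S)
     \<and> (\<forall>Q1\<in>Bspace S. \<forall>Q2\<in>Bspace S.
          supnorm S (\<lambda>x. T Q1 x - T Q2 x) \<le> \<gamma> * supnorm S (\<lambda>x. Q1 x - Q2 x))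
     \<and> (\<exists>Qs\<in>Bspace S. (\<forall>x\<in>space S \<times> sphere 0 1. T Qs x = Qs x)
          \<and> (\<forall>Q\<in>Bspace S. (\<forall>x\<in>space S \<times> sphere 0 1. T Q x = Q x)
                 \<longrightarrow> (\<forall>x\<in>space S \<times> sphere 0 1. Q x = Qs x)))
     \<and> (\<forall>Q\<in>Bspace S. \<forall>s\<in>space S. smooth_on_sphere (\<lambda>c. T Q (s, c)))
     \<and> (\<forall>Q\<in>Bspace S. (\<forall>x\<in>space S \<times> sphere 0 1. T Q x = Q x)
          \<longrightarrow> (\<forall>s\<in>space S. smooth_on_sphere (\<lambda>c. Q (s, c))))"
proof -
  interpret mdp S A astar r P \<pi> \<gamma> \<kappa>
    by (rule mdp.intro) (fact A_fin astar_opt astar_meas r_meas r_bdd P_meas \<pi>_meas \<gamma> \<kappa>)+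
  show ?thesis unfolding T_def
    using T_Bspace T_contr T_fix T_smooth fix_smooth by blast
qed


end
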